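(* Let $F\in\mathcal K$. Then there exists a sequence of bounded measurable functions $h_k:\Omega_\ell\to\mathbb R$ such that $\mathbb E\big[|h_k(S_z\eta)-h_k(\eta)-F(\eta,z)|\big]\to0$ as $k\to\infty$, for all $z_{1,\ell}\in\mathcal R^\ell$ and $z\in\mathcal R$, where $\eta=(\omega,z_{1,\ell})$ and the expectation is over $\omega$.
   Context: Fix $d$, a finite $\mathcal R\subset\mathbb Z^d$ generating $\mathbb Z^d$ as an additive group, and $(\Omega,\mathfrak S,\mathbb P)$ with measurable commuting bijections $T_x$ ($x\in\mathbb Z^d$), $T_{x+y}=T_xT_y$, $T_0=\mathrm{id}$, $\mathbb P$ invariant and ergodic; $\mathbb E$ expectation. Fix $\ell\ge0$; $\Omega_\ell=\Omega\times\mathcal R^\ell$, $\eta=(\omega,z_{1,\ell})$, $z_{i,j}=(z_i,\dots,z_j)$; $S_z(\omega,z_{1,\ell})=(T_{z_1}\omega,(z_{2,\ell},z))$ ($S_z\omega=T_z\omega$ if $\ell=0$). Class $\mathcal K$: measurable $F:\Omega_\ell\times\mathcal R\to\mathbb R$ with (i) $F(\cdot,z_{1,\ell},z)\in L^1(\mathbb P)$ for all $z_{1,\ell},z$; (ii) for all $n\ge\ell$ and $a_{1,n}\in\mathcal R^n$, with $\eta_0=(\omega,a_{n-\ell+1,n})$, $\eta_i=S_{a_i}\eta_{i-1}$: $\mathbb E\sum_{i=0}^{n-1}F(\eta_i,a_{i+1})=0$; (iii) for a.e. $\omega$ and any two step sequences $a_{1,n},\bar a_{1,m}$ from $\eta_0=\bar\eta_0=(\omega,z_{1,\ell})$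 with $\eta_n=\bar\eta_m$: $\sum_{i<n}F(\eta_i,a_{i+1})=\sum_{j<m}F(\bar\eta_j,\bar a_{j+1})$. *)

theory Defs
  imports "HOL-Probability.Probability"
begin

inductive_set zgen :: "('b::ab_group_add) set \<Rightarrow> 'b set" for R where
  zgen_zero: "0 \<in> zgen R"
| zgen_add: "x \<in> zgen R \<Longrightarrow> r \<in> R \<Longrightarrow> x + r \<in> zgen R"
| zgen_diff: "x \<in> zgen R \<Longrightarrow> r \<in> R \<Longrightarrow> x - r \<in> zgen R"

definition Sshift :: "('b \<Rightarrow> 'a \<Rightarrow> 'a) \<Rightarrow> 'b \<Rightarrow> 'a \<times> 'b list \<Rightarrow> 'a \<times> 'b list" where
  "Sshift T z \<eta> = (case snd \<eta> of
      [] \<Rightarrow> (T z (fst \<eta>), [])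
    | (z1 # zs) \<Rightarrow> (T z1 (fst \<eta>), zs @ [z]))"

definition traj :: "('b \<Rightarrow> 'a \<Rightarrow> 'a) \<Rightarrow> 'a \<times> 'b list \<Rightarrow> 'b list \<Rightarrow> nat \<Rightarrow> 'a \<times> 'b list" where
  "traj T \<eta>0 as i = fold (Sshift T) (take i as) \<eta>0"

definition pathsum :: "('b \<Rightarrow> 'a \<Rightarrow> 'a) \<Rightarrow> ('a \<Rightarrow> 'b list \<Rightarrow> 'b \<Rightarrow> real)
    \<Rightarrow> 'a \<times> 'b list \<Rightarrow> 'b list \<Rightarrow> real" where
  "pathsum T F \<eta>0 as = (\<Sum>i<length as. F (fst (traj T \<eta>0 as i)) (snd (traj T \<eta>0 as i)) (as ! i))"

definition ergodic_action :: "'a measure \<Rightarrow> (int^'d \<Rightarrow> 'a \<Rightarrow> 'a) \<Rightarrow> bool" where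
  "ergodic_action M T \<longleftrightarrow>
     prob_space M
   \<and> (\<forall>x. T x \<in> measurable M M \<and> bij_betw (T x) (space M) (space M))
   \<and> (\<forall>x y. \<forall>\<omega>\<in>space M. T (x + y) \<omega> = T x (T y \<omega>))
   \<and> (\<forall>\<omega>\<in>space M. T 0 \<omega> = \<omega>)
   \<and> (\<forall>x. distr M M (T x) = M)
   \<and> (\<forall>A\<in>sets M. (\<forall>x. T x -` A \<inter> space M = A) \<longrightarrow> measure M A = 0 \<or> measure M A = 1)"

definition classK :: "'a measure \<Rightarrow> (int^'d \<Rightarrow> 'a \<Rightarrow> 'a) \<Rightarrow> (int^'d) set \<Rightarrow> nat
    \<Rightarrow> ('a \<Rightarrow> (int^'d) list \<Rightarrow> int^'d \<Rightarrow> real) \<Rightarrow> bool" where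
  "classK M T R l F \<longleftrightarrow>
     (\<forall>zs z. set zs \<subseteq> R \<longrightarrow> length zs = l \<longrightarrow> z \<in> R \<longrightarrow>
         (\<lambda>\<omega>. F \<omega> zs z) \<in> borel_measurable M \<and> integrable M (\<lambda>\<omega>. F \<omega> zs z))
   \<and> (\<forall>as. set as \<subseteq> R \<longrightarrow> l \<le> length as \<longrightarrow>
         (\<integral>\<omega>. pathsum T F (\<omega>, drop (length as - l) as) as \<partial>M) = 0)
   \<and> (AE \<omega> in M. \<forall>zs as bs. set zs \<subseteq> R \<longrightarrow> length zs = l \<longrightarrow> set as \<subseteq> R \<longrightarrow> set bs \<subseteq> R \<longrightarrow>
         traj T (\<omega>, zs) as (length as) = traj T (\<omega>, zs) bs (length bs) \<longrightarrow>
         pathsum T F (\<omega>, zs) as = pathsum T F (\<omega>, zs) bs)"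

end

theory Submission
  imports Defs
begin


definition valid :: "(int^'d) set \<Rightarrow> (real \<times> (int^'d) list) list \<Rightarrow> bool" where
  "valid R ms \<longleftrightarrow> (\<forall>p\<in>set ms. 0 \<le> fst p \<and> set (snd p) \<subseteq> R) \<and> sum_list (map fst ms) = 1"

definition comp :: "(real \<times> 'b list) list \<Rightarrow> (real \<times> 'b list) list \<Rightarrow> (real \<times> 'b list) list" where
  "comp ms2 ms1 = concat (map (\<lambda>q. map (\<lambda>p. (fst q * fst p, snd p @ snd q)) ms1) ms2)"

definition half :: "(real \<times> 'b list) list \<Rightarrow> (real \<times> 'b list) list \<Rightarrow> (real \<times> 'b list) list" where
  "half ms1 ms2 = map (\<lambda>p. (fst p / 2, snd p)) ms1 @ map (\<lambda>p. (fst p / 2, snd p)) ms2"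

definition shiftl :: "'b \<Rightarrow> (real \<times> 'b list) list \<Rightarrow> (real \<times> 'b list) list" where
  "shiftl r ms = map (\<lambda>p. (fst p, r # snd p)) ms"

lemma sum_fst_comp: "sum_list (map fst (comp ms2 ms1)) = sum_list (map fst ms2) * sum_list (map fst ms1)"
  by (induction ms2) (auto simp: comp_def o_def sum_list_const_mult algebra_simps)

lemma valid_comp: "valid R ms1 \<Longrightarrow> valid R ms2 \<Longrightarrow> valid R (comp ms2 ms1)"
  unfolding valid_def using sum_fst_comp[of ms2 ms1] by (auto simp: comp_def)

lemma sum_fst_half: "sum_list (map fst (half ms1 ms2)) = (sum_list (map fst ms1) + sum_list (map fst ms2)) / 2"
proof -
  have *: "sum_list (map fst (map (\<lambda>p. (fst p / 2, snd p)) ms)) = sum_list (map fst ms) / 2" for ms::"(real \<times> 'b list) list"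
    by (induction ms) auto
  show ?thesis by (simp add: half_def * del: map_map)
qed

lemma valid_half: "valid R ms1 \<Longrightarrow> valid R ms2 \<Longrightarrow> valid R (half ms1 ms2)"
  unfolding valid_def using sum_fst_half[of ms1 ms2] by (fastforce simp: half_def)

lemma valid_shiftl: "r \<in> R \<Longrightarrow> valid R ms \<Longrightarrow> valid R (shiftl r ms)"
  unfolding valid_def shiftl_def by (auto simp: o_def)

lemma valid_one: "valid R [(1, [])]"
  by (simp add: valid_def)

locale erg =
  fixes M :: "'a measure" and T :: "int^'d \<Rightarrow> 'a \<Rightarrow> 'a"
  assumes EA: "ergodic_action M T"
begin
lemma EAu: "prob_space M
   \<and> (\<forall>x. T x \<in> measurable M M \<and> bij_betw (T x) (space M) (space M))
   \<and> (\<forall>x y. \<forall>\<omega>\<in>space M. T (x + y) \<omega> = T x (T y \<omega>))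
   \<and> (\<forall>\<omega>\<in>space M. T 0 \<omega> = \<omega>)
   \<and> (\<forall>x. distr M M (T x) = M)
   \<and> (\<forall>A\<in>sets M. (\<forall>x. T x -` A \<inter> space M = A) \<longrightarrow> measure M A = 0 \<or> measure M A = 1)"
  using EA unfolding ergodic_action_def .
lemma prob: "prob_space M" using EAu by (rule conjunct1)
sublocale prob_space M by (rule prob)
lemma Tmeas[measurable]: "T x \<in> measurable M M" using EAu[THEN conjunct2, THEN conjunct1] by (rule allE) (erule conjunct1)
lemma Tspace: "\<omega> \<in> space M \<Longrightarrow> T x \<omega> \<in> space M" by (rule measurable_space[OF Tmeas])
lemma Tadd: "\<omega> \<in> space M \<Longrightarrow> T (x + y) \<omega> = T x (T y \<omega>)"
  using EAu[THEN conjunct2, THEN conjunct2, THEN conjunct1] by (elim allE ballE) auto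
lemma T0: "\<omega> \<in> space M \<Longrightarrow> T 0 \<omega> = \<omega>"
  using EAu[THEN conjunct2, THEN conjunct2, THEN conjunct2, THEN conjunct1] by (elim ballE) auto
lemma Tdistr: "distr M M (T x) = M"
  using EAu[THEN conjunct2, THEN conjunct2, THEN conjunct2, THEN conjunct2, THEN conjunct1] by (elim allE)
lemma erg_sets: assumes "A \<in> sets M" "\<And>x. T x -` A \<inter> space M = A" shows "prob A = 0 \<or> prob A = 1"
proof -
  have H: "\<forall>A\<in>sets M. (\<forall>x. T x -` A \<inter> space M = A) \<longrightarrow> measure M A = 0 \<or> measure M A = 1"
    using EAu[THEN conjunct2, THEN conjunct2, THEN conjunct2, THEN conjunct2, THEN conjunct2] .
  from H assms(1) have "(\<forall>x. T x -` A \<inter> space M = A) \<longrightarrow> measure M A = 0 \<or> measure M A = 1" by (rule bspec)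
  then show ?thesis using assms(2) by blast
qed
lemma integrable_T: "integrable M (f::'a\<Rightarrow>real) \<Longrightarrow> integrable M (\<lambda>\<omega>. f (T x \<omega>))"
  by (rule integrable_distr[OF Tmeas]) (simp add: Tdistr)
lemma integral_T: "(f::'a\<Rightarrow>real) \<in> borel_measurable M \<Longrightarrow> (\<integral>\<omega>. f (T x \<omega>) \<partial>M) = integral\<^sup>L M f"
  using integral_distr[OF Tmeas, of f x] by (simp add: Tdistr)
lemma AE_T: assumes "AE \<omega> in M. P \<omega>" shows "AE \<omega> in M. P (T x \<omega>)"
proof -
  have "AE \<omega> in distr M M (T x). P \<omega>" unfolding Tdistr by (rule assms)
  then show ?thesis by (rule AE_distrD[OF Tmeas])
qed
lemma meas_T: "(f::'a\<Rightarrow>real) \<in> borel_measurable M \<Longrightarrow> (\<lambda>\<omega>. f (T x \<omega>)) \<in> borel_measurable M"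
  by (rule measurable_compose[OF Tmeas])

definition Av :: "(real \<times> (int^'d) list) list \<Rightarrow> ('a \<Rightarrow> real) \<Rightarrow> 'a \<Rightarrow> real" where
  "Av ms g \<omega> = (\<Sum>p\<leftarrow>ms. fst p * g (T (sum_list (snd p)) \<omega>))"

lemma Av_Nil[simp]: "Av [] g \<omega> = 0" by (simp add: Av_def)
lemma Av_Cons[simp]: "Av (p # ms) g \<omega> = fst p * g (T (sum_list (snd p)) \<omega>) + Av ms g \<omega>"
  by (simp add: Av_def)
lemma Av_append[simp]: "Av (ms1 @ ms2) g \<omega> = Av ms1 g \<omega> + Av ms2 g \<omega>"
  by (simp add: Av_def)

lemma Av_half: "Av (half ms1 ms2) g \<omega> = (Av ms1 g \<omega> + Av ms2 g \<omega>) / 2"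
proof -
  have *: "Av (map (\<lambda>p. (fst p / 2, snd p)) ms) g \<omega> = Av ms g \<omega> / 2" for ms
    by (induction ms) (auto simp: field_simps)
  show ?thesis by (simp only: half_def Av_append *) (simp add: add_divide_distrib)
qed

lemma Av_shiftl: "\<omega> \<in> space M \<Longrightarrow> Av (shiftl r ms) g \<omega> = Av ms g (T r \<omega>)"
proof (induction ms)
  case (Cons p ms)
  have "T (r + sum_list (snd p)) \<omega> = T (sum_list (snd p)) (T r \<omega>)"
    using Tadd[OF Cons.prems, of "sum_list (snd p)" r] by (simp add: add.commute)
  then show ?case using Cons by (simp add: shiftl_def)
qed (simp add: shiftl_def)

lemma Av_diff: "Av ms (\<lambda>\<omega>. f \<omega> - g \<omega>) \<omega> = Av ms f \<omega> - Av ms g \<omega>"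
  by (induction ms) (auto simp: algebra_simps)

lemma Av_meas[measurable]: "g \<in> borel_measurable M \<Longrightarrow> Av ms g \<in> borel_measurable M"
proof (induction ms)
  case Nil then show ?case by (simp add: Av_def[abs_def])
next
  case (Cons p ms)
  have "(\<lambda>\<omega>. Av (p # ms) g \<omega>) = (\<lambda>\<omega>. fst p * g (T (sum_list (snd p)) \<omega>) + Av ms g \<omega>)" by simp
  moreover have "(\<lambda>\<omega>. fst p * g (T (sum_list (snd p)) \<omega>) + Av ms g \<omega>) \<in> borel_measurable M"
    using Cons by measurable
  ultimately show ?case by metis
qed

lemma Av_bound: "(\<forall>p\<in>set ms. 0 \<le> fst p) \<Longrightarrow> (\<forall>\<omega>\<in>space M. \<bar>g \<omega>\<bar> \<le> B) \<Longrightarrow> \<omega> \<in> space M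
   \<Longrightarrow> \<bar>Av ms g \<omega>\<bar> \<le> sum_list (map fst ms) * B"
proof (induction ms)
  case (Cons p ms)
  have "\<bar>g (T (sum_list (snd p)) \<omega>)\<bar> \<le> B" using Cons.prems Tspace by blast
  then have "\<bar>fst p * g (T (sum_list (snd p)) \<omega>)\<bar> \<le> fst p * B"
    using Cons.prems(1) by (simp add: abs_mult mult_left_mono)
  with Cons show ?case by (simp add: algebra_simps)
qed simp

lemma Av_int: "integrable M g \<Longrightarrow> integrable M (Av ms g) \<and> integral\<^sup>L M (Av ms g) = sum_list (map fst ms) * integral\<^sup>L M g"
proof (induction ms)
  case Nil then show ?case by (simp add: Av_def[abs_def])
next
  case (Cons p ms)
  have i1: "integrable M (\<lambda>\<omega>. fst p * g (T (sum_list (snd p)) \<omega>))"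
    using integrable_T[OF Cons.prems] by simp
  have e1: "(\<integral>\<omega>. fst p * g (T (sum_list (snd p)) \<omega>) \<partial>M) = fst p * integral\<^sup>L M g"
    using integral_T[of g] Cons.prems by simp
  have "(\<lambda>\<omega>. Av (p # ms) g \<omega>) = (\<lambda>\<omega>. fst p * g (T (sum_list (snd p)) \<omega>) + Av ms g \<omega>)" by simp
  with i1 e1 Cons show ?case by (simp add: algebra_simps)
qed

lemma Av_L1: "integrable M g \<Longrightarrow> (\<forall>p\<in>set ms. 0 \<le> fst p) \<Longrightarrow>
   (\<integral>\<omega>. \<bar>Av ms g \<omega>\<bar> \<partial>M) \<le> sum_list (map fst ms) * (\<integral>\<omega>. \<bar>g \<omega>\<bar> \<partial>M)"
proof (induction ms)
  case Nil then show ?case by simp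
next
  case (Cons p ms)
  have ia: "integrable M (\<lambda>\<omega>. \<bar>g \<omega>\<bar>)" using Cons.prems by auto
  have i1: "integrable M (\<lambda>\<omega>. fst p * \<bar>g (T (sum_list (snd p)) \<omega>)\<bar>)"
    using integrable_T[OF ia] by simp
  have i2: "integrable M (\<lambda>\<omega>. \<bar>Av ms g \<omega>\<bar>)" using Av_int[OF Cons.prems(1)] by auto
  have "(\<integral>\<omega>. \<bar>Av (p#ms) g \<omega>\<bar> \<partial>M) \<le> (\<integral>\<omega>. fst p * \<bar>g (T (sum_list (snd p)) \<omega>)\<bar> + \<bar>Av ms g \<omega>\<bar> \<partial>M)"
    apply (rule integral_mono_AE')
    using i1 i2 Cons.prems(2) by (auto simp: abs_mult intro!: abs_triangle_ineq[THEN order_trans])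
  also have "\<dots> = fst p * (\<integral>\<omega>. \<bar>g \<omega>\<bar> \<partial>M) + (\<integral>\<omega>. \<bar>Av ms g \<omega>\<bar> \<partial>M)"
    using i1 i2 integral_T[of "\<lambda>\<omega>. \<bar>g \<omega>\<bar>"] Cons.prems(1) by simp
  also have "\<dots> \<le> fst p * (\<integral>\<omega>. \<bar>g \<omega>\<bar> \<partial>M) + sum_list (map fst ms) * (\<integral>\<omega>. \<bar>g \<omega>\<bar> \<partial>M)"
    using Cons by simp
  finally show ?case by (simp add: algebra_simps)
qed

lemma Av_comp: "\<omega> \<in> space M \<Longrightarrow> Av ms2 (Av ms1 g) \<omega> = Av (comp ms2 ms1) g \<omega>"
proof (induction ms2)
  case Nil then show ?case by (simp add: comp_def)
next
  case (Cons q ms2)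
  have "Av (map (\<lambda>p. (fst q * fst p, snd p @ snd q)) ms1) g \<omega> = fst q * Av ms1 g (T (sum_list (snd q)) \<omega>)"
    by (induction ms1) (auto simp: Tadd[OF Cons.prems] algebra_simps)
  then show ?case using Cons by (simp add: comp_def)
qed

end


context erg begin

lemma bint: "f \<in> borel_measurable M \<Longrightarrow> AE \<omega> in M. \<bar>f \<omega>\<bar> \<le> B \<Longrightarrow> integrable M (f::'a\<Rightarrow>real)"
  by (rule integrable_const_bound[where B=B]) auto

lemma erg_zero:
  fixes f :: "'a \<Rightarrow> real"
  assumes fm: "f \<in> borel_measurable M" and fi: "integrable M f"
    and inv: "\<And>x. AE \<omega> in M. f (T x \<omega>) = f \<omega>" and f0: "integral\<^sup>L M f = 0"
  shows "AE \<omega> in M. f \<omega> = 0"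
proof -
  have invall: "AE \<omega> in M. \<forall>x. f (T x \<omega>) = f \<omega>" using inv by (simp add: AE_all_countable)
  have key: "AE \<omega> in M. h \<omega> \<le> 0" if hm: "h \<in> borel_measurable M" and hi: "integrable M h"
    and h0: "integral\<^sup>L M h = 0" and hinv: "AE \<omega> in M. \<forall>x. h (T x \<omega>) = h \<omega>" for h :: "'a \<Rightarrow> real"
  proof -
    define A where "A = {\<omega>\<in>space M. \<forall>x. 0 < h (T x \<omega>)}"
    have Am: "A \<in> sets M" unfolding A_def using hm by measurable
    have Ainv: "T y -` A \<inter> space M = A" for y
    proof (intro set_eqI iffI)
      fix \<omega> assume "\<omega> \<in> T y -` A \<inter> space M"
      then have om: "\<omega> \<in> space M" and H: "\<forall>x. 0 < h (T x (T y \<omega>))" by (auto simp: A_def)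
      have "0 < h (T x \<omega>)" for x using H[rule_format, of "x - y"] Tadd[OF om, of "x - y" y] by simp
      then show "\<omega> \<in> A" using om by (simp add: A_def)
    next
      fix \<omega> assume "\<omega> \<in> A"
      then have om: "\<omega> \<in> space M" and H: "\<forall>x. 0 < h (T x \<omega>)" by (auto simp: A_def)
      have "0 < h (T x (T y \<omega>))" for x using H[rule_format, of "x + y"] Tadd[OF om, of x y] by simp
      then show "\<omega> \<in> T y -` A \<inter> space M" using om Tspace[OF om] by (simp add: A_def)
    qed
    have AEA: "AE \<omega> in M. (\<omega> \<in> A) = (0 < h \<omega>)"
      using hinv AE_space by eventually_elim (auto simp: A_def)
    from erg_sets[OF Am Ainv] have "prob A = 0 \<or> prob A = 1" .
    then show ?thesis
    proof
      assume "prob A = 0"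
      then have "AE \<omega> in M. \<omega> \<notin> A" using prob_eq_0[OF Am] by simp
      then show ?thesis using AEA by eventually_elim auto
    next
      assume "prob A = 1"
      then have "AE \<omega> in M. \<omega> \<in> A" using prob_eq_1[OF Am] by simp
      then have pos: "AE \<omega> in M. 0 < h \<omega>" using AEA by eventually_elim auto
      then have nn: "AE \<omega> in M. 0 \<le> h \<omega>" by eventually_elim auto
      have "AE \<omega> in M. h \<omega> = 0" using integral_nonneg_eq_0_iff_AE[OF hi nn] h0 by simp
      with pos have "AE \<omega> in M. False" by eventually_elim auto
      then show ?thesis by simp
    qed
  qed
  have 1: "AE \<omega> in M. f \<omega> \<le> 0" using key[OF fm fi f0 invall] .
  have 2: "AE \<omega> in M. - f \<omega> \<le> 0"
    using key[of "\<lambda>\<omega>. - f \<omega>"] fm fi f0 invall by simp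
  show ?thesis using 1 2 by eventually_elim auto
qed


lemma sq_int:
  fixes f :: "'a \<Rightarrow> real"
  assumes "f \<in> borel_measurable M" "AE \<omega> in M. \<bar>f \<omega>\<bar> \<le> B"
  shows "integrable M (\<lambda>\<omega>. (f \<omega>)^2)"
proof (rule bint[where B="B^2"])
  show "(\<lambda>\<omega>. (f \<omega>)^2) \<in> borel_measurable M" using assms(1) by measurable
  show "AE \<omega> in M. \<bar>(f \<omega>)^2\<bar> \<le> B^2" using assms(2)
  proof eventually_elim
    fix \<omega> assume "\<bar>f \<omega>\<bar> \<le> B"
    then show "\<bar>(f \<omega>)^2\<bar> \<le> B^2" using power_mono[of "\<bar>f \<omega>\<bar>" B 2] by simp
  qed
qed

lemma sqd_int:
  fixes f1 f2 :: "'a \<Rightarrow> real"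
  assumes "f1 \<in> borel_measurable M" "f2 \<in> borel_measurable M"
    "AE \<omega> in M. \<bar>f1 \<omega>\<bar> \<le> B" "AE \<omega> in M. \<bar>f2 \<omega>\<bar> \<le> B"
  shows "integrable M (\<lambda>\<omega>. (f1 \<omega> - f2 \<omega>)^2)"
  by (rule sq_int[where B="2*B"]) (use assms in \<open>measurable\<close>, use assms(3,4) in \<open>eventually_elim, auto\<close>)

lemma para_lemma:
  fixes f1 f2 :: "'a \<Rightarrow> real"
  assumes m: "f1 \<in> borel_measurable M" "f2 \<in> borel_measurable M"
    and b: "AE \<omega> in M. \<bar>f1 \<omega>\<bar> \<le> B" "AE \<omega> in M. \<bar>f2 \<omega>\<bar> \<le> B"
  shows "(\<integral>\<omega>. (f1 \<omega> - f2 \<omega>)^2 \<partial>M) = 2 * (\<integral>\<omega>. (f1 \<omega>)^2 \<partial>M) + 2 * (\<integral>\<omega>. (f2 \<omega>)^2 \<partial>M)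
      - 4 * (\<integral>\<omega>. ((f1 \<omega> + f2 \<omega>) / 2)^2 \<partial>M)"
proof -
  have i1: "integrable M (\<lambda>\<omega>. (f1 \<omega>)^2)" by (rule sq_int[OF m(1) b(1)])
  have i2: "integrable M (\<lambda>\<omega>. (f2 \<omega>)^2)" by (rule sq_int[OF m(2) b(2)])
  have i3: "integrable M (\<lambda>\<omega>. ((f1 \<omega> + f2 \<omega>) / 2)^2)"
    by (rule sq_int[where B=B]) (use m in \<open>measurable\<close>, use b in \<open>eventually_elim, auto\<close>)
  have "(\<integral>\<omega>. (f1 \<omega> - f2 \<omega>)^2 \<partial>M) = (\<integral>\<omega>. 2 * (f1 \<omega>)^2 + 2 * (f2 \<omega>)^2 - 4 * ((f1 \<omega> + f2 \<omega>) / 2)^2 \<partial>M)"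
    by (rule Bochner_Integration.integral_cong) (auto simp: power2_eq_square field_simps)
  also have "\<dots> = 2 * (\<integral>\<omega>. (f1 \<omega>)^2 \<partial>M) + 2 * (\<integral>\<omega>. (f2 \<omega>)^2 \<partial>M)
      - 4 * (\<integral>\<omega>. ((f1 \<omega> + f2 \<omega>) / 2)^2 \<partial>M)"
    using i1 i2 i3 by simp
  finally show ?thesis .
qed

lemma abs_le_sq: "0 < (t::real) \<Longrightarrow> \<bar>x\<bar> \<le> x^2 / t + t / 4"
proof -
  assume t: "0 < t"
  have "0 \<le> (\<bar>x\<bar> - t/2)^2" by simp
  then have "t * \<bar>x\<bar> \<le> x^2 + t^2/4" by (simp add: power2_eq_square algebra_simps abs_mult_self_eq)
  then show ?thesis using t by (simp add: field_simps power2_eq_square)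
qed

lemma L1L2:
  fixes f :: "'a \<Rightarrow> real"
  assumes "f \<in> borel_measurable M" "AE \<omega> in M. \<bar>f \<omega>\<bar> \<le> B" "0 < t"
  shows "(\<integral>\<omega>. \<bar>f \<omega>\<bar> \<partial>M) \<le> (\<integral>\<omega>. (f \<omega>)^2 \<partial>M) / t + t / 4"
proof -
  have i: "integrable M (\<lambda>\<omega>. (f \<omega>)^2)" by (rule sq_int[OF assms(1,2)])
  have "(\<integral>\<omega>. \<bar>f \<omega>\<bar> \<partial>M) \<le> (\<integral>\<omega>. (f \<omega>)^2 / t + t / 4 \<partial>M)"
    by (rule integral_mono_AE') (use i assms(3) abs_le_sq in auto)
  also have "\<dots> = (\<integral>\<omega>. (f \<omega>)^2 \<partial>M) / t + t / 4"
    using i by (simp add: prob_space)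
  finally show ?thesis .
qed

end


context erg begin

lemma sq3: "((a::real) - d)^2 \<le> 3 * ((a - b)^2 + (c - b)^2 + (c - d)^2)"
proof -
  have "0 \<le> ((a-b) - (b-c))^2 + ((b-c) - (c-d))^2 + ((a-b) - (c-d))^2" by simp
  then show ?thesis by (simp add: power2_eq_square algebra_simps)
qed

lemma core2:
  fixes g :: "'a \<Rightarrow> real"
  assumes R: "zgen R = UNIV" and gm: "g \<in> borel_measurable M" and gB: "\<forall>\<omega>\<in>space M. \<bar>g \<omega>\<bar> \<le> B"
    and g0: "integral\<^sup>L M g = 0" and e: "0 < e"
  shows "\<exists>ms. valid R ms \<and> (\<integral>\<omega>. (Av ms g \<omega>)^2 \<partial>M) < e"
proof -
  define Q where "Q f = (\<integral>\<omega>. (f \<omega>)^2 \<partial>M)" for f :: "'a \<Rightarrow> real"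
  define VS where "VS = {ms. valid R ms}"
  define \<delta> where "\<delta> = Inf ((\<lambda>ms. Q (Av ms g)) ` VS)"
  have Am: "Av ms g \<in> borel_measurable M" for ms using gm by (rule Av_meas)
  have AB: "valid R ms \<Longrightarrow> \<omega> \<in> space M \<Longrightarrow> \<bar>Av ms g \<omega>\<bar> \<le> B" for ms \<omega>
    using Av_bound[of ms g B \<omega>] gB by (auto simp: valid_def)
  have ABae: "valid R ms \<Longrightarrow> AE \<omega> in M. \<bar>Av ms g \<omega>\<bar> \<le> B" for ms using AB by (auto intro: AE_I2)
  have gi: "integrable M g" by (rule bint[where B=B]) (use gm gB in \<open>auto intro: AE_I2\<close>)
  have Q0: "0 \<le> Q f" for f unfolding Q_def by (rule integral_nonneg_AE) auto
  have ne: "VS \<noteq> {}" using valid_one unfolding VS_def by blast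
  have bdd: "bdd_below ((\<lambda>ms. Q (Av ms g)) ` VS)" by (rule bdd_belowI[where m=0]) (use Q0 in auto)
  have low: "valid R ms \<Longrightarrow> \<delta> \<le> Q (Av ms g)" for ms
    unfolding \<delta>_def by (rule cInf_lower) (use bdd in \<open>auto simp: VS_def\<close>)
  have ex: "\<forall>n. \<exists>ms. valid R ms \<and> Q (Av ms g) < \<delta> + inverse (real (Suc n))"
  proof
    fix n
    have ne2: "(\<lambda>ms. Q (Av ms g)) ` VS \<noteq> {}" using ne by simp
    have "Inf ((\<lambda>ms. Q (Av ms g)) ` VS) < \<delta> + inverse (real (Suc n))" unfolding \<delta>_def by simp
    from cInf_lessD[OF ne2 this] obtain y where "y \<in> (\<lambda>ms. Q (Av ms g)) ` VS" "y < \<delta> + inverse (real (Suc n))"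
      by blast
    then show "\<exists>ms. valid R ms \<and> Q (Av ms g) < \<delta> + inverse (real (Suc n))" by (auto simp: VS_def)
  qed
  from choice[OF ex] obtain mss where mss0: "\<forall>n. valid R (mss n) \<and> Q (Av (mss n) g) < \<delta> + inverse (real (Suc n))"
    by blast
  have mss: "\<And>n. valid R (mss n)" "\<And>n. Q (Av (mss n) g) < \<delta> + inverse (real (Suc n))"
    using mss0 by auto
  define fs where "fs n = Av (mss n) g" for n
  have fsm[measurable]: "fs n \<in> borel_measurable M" for n using Am fs_def by simp
  have fsB: "\<omega> \<in> space M \<Longrightarrow> \<bar>fs n \<omega>\<bar> \<le> B" for n \<omega> using AB mss(1) fs_def by simp
  have fsBae: "AE \<omega> in M. \<bar>fs n \<omega>\<bar> \<le> B" for n using fsB by (auto intro: AE_I2)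
  have fsi: "integrable M (fs n)" for n by (rule bint[OF fsm fsBae])
  have fs0: "integral\<^sup>L M (fs n) = 0" for n
    using Av_int[OF gi, of "mss n"] mss(1)[of n] g0 by (simp add: fs_def valid_def)
  have para: "Q (\<lambda>\<omega>. Av ms1 g \<omega> - Av ms2 g \<omega>) \<le> 2 * Q (Av ms1 g) + 2 * Q (Av ms2 g) - 4 * \<delta>"
    if v: "valid R ms1" "valid R ms2" for ms1 ms2
  proof -
    have "Q (\<lambda>\<omega>. Av ms1 g \<omega> - Av ms2 g \<omega>) = 2 * Q (Av ms1 g) + 2 * Q (Av ms2 g) - 4 * Q (Av (half ms1 ms2) g)"
      using para_lemma[OF Am Am ABae[OF v(1)] ABae[OF v(2)]] unfolding Q_def Av_half by simp
    moreover have "\<delta> \<le> Q (Av (half ms1 ms2) g)" using low valid_half v by blast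
    ultimately show ?thesis by linarith
  qed
  have qij: "Q (\<lambda>\<omega>. fs i \<omega> - fs j \<omega>) < 2 * inverse (real (Suc i)) + 2 * inverse (real (Suc j))" for i j
    using para[OF mss(1)[of i] mss(1)[of j]] mss(2)[of i] mss(2)[of j] unfolding fs_def by linarith
  have cau: "\<exists>N. \<forall>i\<ge>N. \<forall>j\<ge>N. (LINT x|M. norm (fs i x - fs j x)) < e'" if e': "e' > 0" for e'
  proof -
    obtain N where N: "inverse (real (Suc N)) < e'^2 / 8" using reals_Archimedean[of "e'^2/8"] e' by auto
    have "(LINT x|M. norm (fs i x - fs j x)) < e'" if "i \<ge> N" "j \<ge> N" for i j
    proof -
      have "inverse (real (Suc i)) \<le> inverse (real (Suc N))" using that by (simp add: field_simps)
      moreover have "inverse (real (Suc j)) \<le> inverse (real (Suc N))" using that by (simp add: field_simps)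
      ultimately have q: "Q (\<lambda>\<omega>. fs i \<omega> - fs j \<omega>) < e'^2 / 2" using qij[of i j] N by linarith
      have "(LINT x|M. norm (fs i x - fs j x)) \<le> Q (\<lambda>\<omega>. fs i \<omega> - fs j \<omega>) / e' + e' / 4"
      proof -
        have ae2: "AE x in M. \<bar>fs i x - fs j x\<bar> \<le> 2*B" using fsBae[of i] fsBae[of j] by eventually_elim auto
        show ?thesis unfolding real_norm_def Q_def by (rule L1L2[OF _ ae2 e']) measurable
      qed
      also have "\<dots> < (e'^2/2) / e' + e' / 4" using divide_strict_right_mono[OF q e'] by simp
      also have "\<dots> < e'" using e' by (simp add: power2_eq_square)
      finally show ?thesis .
    qed
    then show ?thesis by blast
  qed
  obtain r where r: "strict_mono r" "AE x in M. Cauchy (\<lambda>i. fs (r i) x)"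
    using cauchy_L1_AE_cauchy_subseq[OF fsi cau] by blast
  define f where "f \<omega> = lim (\<lambda>i. fs (r i) \<omega>)" for \<omega>
  have fm[measurable]: "f \<in> borel_measurable M" unfolding f_def by measurable
  have conv: "AE \<omega> in M. (\<lambda>i. fs (r i) \<omega>) \<longlonglongrightarrow> f \<omega>"
    using r(2) by eventually_elim (simp add: f_def Cauchy_convergent_iff convergent_LIMSEQ_iff)
  have fBae: "AE \<omega> in M. \<bar>f \<omega>\<bar> \<le> B"
  proof -
    have "AE \<omega> in M. \<forall>n. \<bar>fs n \<omega>\<bar> \<le> B" using fsBae by (simp add: AE_all_countable)
    then show ?thesis using conv
    proof eventually_elim
      fix \<omega> assume a: "\<forall>n. \<bar>fs n \<omega>\<bar> \<le> B" and c: "(\<lambda>i. fs (r i) \<omega>) \<longlonglongrightarrow> f \<omega>"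
      show "\<bar>f \<omega>\<bar> \<le> B" using LIMSEQ_le_const2[OF tendsto_rabs[OF c]] a by blast
    qed
  qed
  have fi: "integrable M f" by (rule bint[OF fm fBae])
  have hQa: "(\<lambda>i. Q (fs (r i))) \<longlonglongrightarrow> Q f"
    unfolding Q_def
  proof (rule integral_dominated_convergence[where w="\<lambda>_. B^2"])
    show "AE \<omega> in M. (\<lambda>i. (fs (r i) \<omega>)^2) \<longlonglongrightarrow> (f \<omega>)^2"
      using conv by eventually_elim (rule tendsto_power)
    show "AE \<omega> in M. norm ((fs (r i) \<omega>)^2) \<le> B^2" for i using fsBae[of "r i"]
    proof eventually_elim
      fix \<omega> assume "\<bar>fs (r i) \<omega>\<bar> \<le> B"
      then show "norm ((fs (r i) \<omega>)^2) \<le> B^2" using power_mono[of "\<bar>fs (r i) \<omega>\<bar>" B 2] by simp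
    qed
  qed auto
  have hQb: "(\<lambda>i. Q (\<lambda>\<omega>. fs (r i) \<omega> - f \<omega>)) \<longlonglongrightarrow> 0"
  proof -
    have "(\<lambda>i. Q (\<lambda>\<omega>. fs (r i) \<omega> - f \<omega>)) \<longlonglongrightarrow> (\<integral>\<omega>. 0 \<partial>M)"
      unfolding Q_def
    proof (rule integral_dominated_convergence[where w="\<lambda>_. (2*B)^2"])
      show "AE \<omega> in M. (\<lambda>i. (fs (r i) \<omega> - f \<omega>)^2) \<longlonglongrightarrow> 0"
        using conv
      proof eventually_elim
        fix \<omega> assume "(\<lambda>i. fs (r i) \<omega>) \<longlonglongrightarrow> f \<omega>"
        then have "(\<lambda>i. fs (r i) \<omega> - f \<omega>) \<longlonglongrightarrow> 0" by (simp add: LIM_zero)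
        then show "(\<lambda>i. (fs (r i) \<omega> - f \<omega>)^2) \<longlonglongrightarrow> 0" using tendsto_power[of _ 0 _ 2] by fastforce
      qed
      show "AE \<omega> in M. norm ((fs (r i) \<omega> - f \<omega>)^2) \<le> (2*B)^2" for i using fsBae[of "r i"] fBae
      proof eventually_elim
        fix \<omega> assume "\<bar>fs (r i) \<omega>\<bar> \<le> B" "\<bar>f \<omega>\<bar> \<le> B"
        then have "\<bar>fs (r i) \<omega> - f \<omega>\<bar> \<le> 2*B" by linarith
        then show "norm ((fs (r i) \<omega> - f \<omega>)^2) \<le> (2*B)^2" using power_mono[of "\<bar>fs (r i) \<omega> - f \<omega>\<bar>" "2*B" 2] by simp
      qed
    qed auto
    then show ?thesis by simp
  qed
  have f0: "integral\<^sup>L M f = 0"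
  proof -
    have "(\<lambda>i. integral\<^sup>L M (fs (r i))) \<longlonglongrightarrow> integral\<^sup>L M f"
    proof (rule integral_dominated_convergence[where w="\<lambda>_. B"])
      show "AE \<omega> in M. norm (fs (r i) \<omega>) \<le> B" for i using fsBae[of "r i"] by simp
    qed (use conv in auto)
    then show ?thesis using fs0 by (simp add: LIMSEQ_const_iff)
  qed
  have hQn: "(\<lambda>n. Q (fs n)) \<longlonglongrightarrow> \<delta>"
  proof (rule tendsto_sandwich[of "\<lambda>n. \<delta>" _ sequentially "\<lambda>n. \<delta> + inverse (real (Suc n))"])
    show "eventually (\<lambda>n. \<delta> \<le> Q (fs n)) sequentially" using low mss(1) by (simp add: fs_def)
    show "eventually (\<lambda>n. Q (fs n) \<le> \<delta> + inverse (real (Suc n))) sequentially"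
      using mss(2) by (simp add: fs_def less_imp_le)
    show "(\<lambda>n. \<delta>) \<longlonglongrightarrow> \<delta>" by simp
    show "(\<lambda>n. \<delta> + inverse (real (Suc n))) \<longlonglongrightarrow> \<delta>"
      using tendsto_add[OF tendsto_const LIMSEQ_inverse_real_of_nat, of \<delta>] by simp
  qed
  have hQn': "(\<lambda>i. Q (fs (r i))) \<longlonglongrightarrow> \<delta>" using LIMSEQ_subseq_LIMSEQ[OF hQn r(1)] by (simp add: o_def)
  have Qf: "Q f = \<delta>" using LIMSEQ_unique[OF hQa hQn'] .
  have inv: "AE \<omega> in M. f (T r0 \<omega>) = f \<omega>" if r0: "r0 \<in> R" for r0
  proof -
    have sh: "Q (\<lambda>\<omega>. fs n \<omega> - fs n (T r0 \<omega>)) \<le> 4 * Q (fs n) - 4 * \<delta>" for n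
    proof -
      have v: "valid R (shiftl r0 (mss n))" by (rule valid_shiftl[OF r0 mss(1)])
      have e1: "Q (Av (shiftl r0 (mss n)) g) = Q (fs n)"
      proof -
        have "Q (Av (shiftl r0 (mss n)) g) = (\<integral>\<omega>. (fs n (T r0 \<omega>))^2 \<partial>M)"
          unfolding Q_def fs_def by (rule Bochner_Integration.integral_cong) (auto simp: Av_shiftl)
        also have "\<dots> = Q (fs n)" unfolding Q_def by (rule integral_T) measurable
        finally show ?thesis .
      qed
      have e2: "Q (\<lambda>\<omega>. fs n \<omega> - fs n (T r0 \<omega>)) = Q (\<lambda>\<omega>. Av (mss n) g \<omega> - Av (shiftl r0 (mss n)) g \<omega>)"
        unfolding Q_def fs_def by (rule Bochner_Integration.integral_cong) (auto simp: Av_shiftl)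
      show ?thesis using para[OF mss(1)[of n] v] e1 e2 by (simp add: fs_def)
    qed
    define D where "D = Q (\<lambda>\<omega>. f (T r0 \<omega>) - f \<omega>)"
    have fTB: "AE \<omega> in M. \<bar>f (T r0 \<omega>)\<bar> \<le> B" using AE_T[OF fBae] .
    have fTm[measurable]: "(\<lambda>\<omega>. f (T r0 \<omega>)) \<in> borel_measurable M" by measurable
    have Dle: "D \<le> 3 * (Q (\<lambda>\<omega>. fs (r i) \<omega> - f \<omega>) + (4 * Q (fs (r i)) - 4 * \<delta>) + Q (\<lambda>\<omega>. fs (r i) \<omega> - f \<omega>))" for i
    proof -
      define n where "n = r i"
      have fsTm[measurable]: "(\<lambda>\<omega>. fs n (T r0 \<omega>)) \<in> borel_measurable M" by measurable
      have fsTB: "AE \<omega> in M. \<bar>fs n (T r0 \<omega>)\<bar> \<le> B" using AE_T[OF fsBae[of n]] .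
      have i1: "integrable M (\<lambda>\<omega>. (f (T r0 \<omega>) - fs n (T r0 \<omega>))^2)"
        by (rule sqd_int[OF fTm fsTm fTB fsTB])
      have i2: "integrable M (\<lambda>\<omega>. (fs n \<omega> - fs n (T r0 \<omega>))^2)"
        by (rule sqd_int[OF fsm fsTm fsBae fsTB])
      have i3: "integrable M (\<lambda>\<omega>. (fs n \<omega> - f \<omega>)^2)"
        by (rule sqd_int[OF fsm fm fsBae fBae])
      have "D \<le> (\<integral>\<omega>. 3 * ((f (T r0 \<omega>) - fs n (T r0 \<omega>))^2 + (fs n \<omega> - fs n (T r0 \<omega>))^2 + (fs n \<omega> - f \<omega>)^2) \<partial>M)"
        unfolding D_def Q_def
        by (rule integral_mono_AE') (use i1 i2 i3 sq3 in auto)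
      also have "\<dots> = 3 * ((\<integral>\<omega>. (f (T r0 \<omega>) - fs n (T r0 \<omega>))^2 \<partial>M) + Q (\<lambda>\<omega>. fs n \<omega> - fs n (T r0 \<omega>)) + Q (\<lambda>\<omega>. fs n \<omega> - f \<omega>))"
        using i1 i2 i3 by (simp add: Q_def)
      also have "(\<integral>\<omega>. (f (T r0 \<omega>) - fs n (T r0 \<omega>))^2 \<partial>M) = Q (\<lambda>\<omega>. fs n \<omega> - f \<omega>)"
      proof -
        have "(\<integral>\<omega>. (f (T r0 \<omega>) - fs n (T r0 \<omega>))^2 \<partial>M) = (\<integral>\<omega>. (f \<omega> - fs n \<omega>)^2 \<partial>M)"
          by (rule integral_T[of "\<lambda>\<omega>. (f \<omega> - fs n \<omega>)^2"]) measurable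
        then show ?thesis by (simp add: Q_def power2_commute)
      qed
      finally have "D \<le> 3 * (Q (\<lambda>\<omega>. fs n \<omega> - f \<omega>) + Q (\<lambda>\<omega>. fs n \<omega> - fs n (T r0 \<omega>)) + Q (\<lambda>\<omega>. fs n \<omega> - f \<omega>))" .
      then show ?thesis using sh[of n] unfolding n_def distrib_left right_diff_distrib by linarith
    qed
    have lim: "(\<lambda>i. 3 * (Q (\<lambda>\<omega>. fs (r i) \<omega> - f \<omega>) + (4 * Q (fs (r i)) - 4 * \<delta>) + Q (\<lambda>\<omega>. fs (r i) \<omega> - f \<omega>)))
        \<longlonglongrightarrow> 3 * (0 + (4 * \<delta> - 4 * \<delta>) + 0)"
      using hQb hQa Qf by (intro tendsto_intros) auto
    have "D \<le> 3 * (0 + (4 * \<delta> - 4 * \<delta>) + 0)" by (rule LIMSEQ_le_const[OF lim]) (use Dle in auto)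
    then have Dle0: "D \<le> 0" by simp
    have i4: "integrable M (\<lambda>\<omega>. (f (T r0 \<omega>) - f \<omega>)^2)" by (rule sqd_int[OF fTm fm fTB fBae])
    have "D = 0" using Dle0 Q0[of "\<lambda>\<omega>. f (T r0 \<omega>) - f \<omega>"] unfolding D_def by linarith
    then have "AE \<omega> in M. (f (T r0 \<omega>) - f \<omega>)^2 = 0"
      using integral_nonneg_eq_0_iff_AE[OF i4] unfolding D_def Q_def by simp
    then show ?thesis by eventually_elim simp
  qed
  have invx: "AE \<omega> in M. f (T x \<omega>) = f \<omega>" for x
  proof -
    have "x \<in> zgen R" using R by simp
    then show ?thesis
    proof induction
      case zgen_zero show ?case using AE_space by eventually_elim (simp add: T0)
    next
      case (zgen_add x r)
      have a1: "AE \<omega> in M. f (T x (T r \<omega>)) = f (T r \<omega>)" using AE_T[OF zgen_add.IH] .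
      show ?case using a1 inv[OF zgen_add.hyps(2)] AE_space by eventually_elim (simp add: Tadd)
    next
      case (zgen_diff x r)
      have a1: "AE \<omega> in M. f (T x (T (-r) \<omega>)) = f (T (-r) \<omega>)" using AE_T[OF zgen_diff.IH] .
      have a2: "AE \<omega> in M. f (T r (T (-r) \<omega>)) = f (T (-r) \<omega>)" using AE_T[OF inv[OF zgen_diff.hyps(2)]] .
      show ?case using a1 a2 AE_space
      proof eventually_elim
        fix \<omega> assume h: "f (T x (T (-r) \<omega>)) = f (T (-r) \<omega>)" "f (T r (T (-r) \<omega>)) = f (T (-r) \<omega>)" "\<omega> \<in> space M"
        have "T r (T (-r) \<omega>) = \<omega>" using Tadd[OF h(3), of r "-r"] T0[OF h(3)] by simp
        moreover have "T (x - r) \<omega> = T x (T (-r) \<omega>)" using Tadd[OF h(3), of x "-r"] by simp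
        ultimately show "f (T (x - r) \<omega>) = f \<omega>" using h by simp
      qed
    qed
  qed
  have fz: "AE \<omega> in M. f \<omega> = 0" by (rule erg_zero[OF fm fi invx f0])
  have "AE \<omega> in M. (f \<omega>)^2 = 0" using fz by eventually_elim simp
  then have "Q f = 0" unfolding Q_def by (rule integral_eq_zero_AE)
  then have d0: "\<delta> = 0" using Qf by simp
  obtain n where "inverse (real (Suc n)) < e" using reals_Archimedean[OF e] by auto
  then have "Q (fs n) < e" using mss(2)[of n] d0 by (simp add: fs_def)
  then show ?thesis using mss(1)[of n] unfolding fs_def Q_def by blast
qed
end


context erg begin

lemma coreL1:
  fixes g :: "'a \<Rightarrow> real"
  assumes R: "zgen R = UNIV" and gi: "integrable M g" and g0: "integral\<^sup>L M g = 0" and e: "0 < e"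
  shows "\<exists>ms. valid R ms \<and> (\<integral>\<omega>. \<bar>Av ms g \<omega>\<bar> \<partial>M) < e"
proof -
  have gm[measurable]: "g \<in> borel_measurable M" using gi by auto
  define gK where "gK K \<omega> = max (- real K) (min (real K) (g \<omega>))" for K :: nat and \<omega>
  have gKm[measurable]: "gK K \<in> borel_measurable M" for K unfolding gK_def by measurable
  have conv: "(\<lambda>K. \<integral>\<omega>. \<bar>g \<omega> - gK K \<omega>\<bar> \<partial>M) \<longlonglongrightarrow> (\<integral>\<omega>. 0 \<partial>M)"
  proof (rule integral_dominated_convergence[where w="\<lambda>\<omega>. \<bar>g \<omega>\<bar>"])
    show "AE \<omega> in M. (\<lambda>K. \<bar>g \<omega> - gK K \<omega>\<bar>) \<longlonglongrightarrow> 0"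
    proof (rule AE_I2)
      fix \<omega>
      have "eventually (\<lambda>K. \<bar>g \<omega> - gK K \<omega>\<bar> = 0) sequentially"
        unfolding eventually_sequentially
      proof (intro exI allI impI)
        fix K assume "nat \<lceil>\<bar>g \<omega>\<bar>\<rceil> \<le> K"
        then have "\<bar>g \<omega>\<bar> \<le> real K" by linarith
        then show "\<bar>g \<omega> - gK K \<omega>\<bar> = 0" by (auto simp: gK_def)
      qed
      then show "(\<lambda>K. \<bar>g \<omega> - gK K \<omega>\<bar>) \<longlonglongrightarrow> 0" by (rule tendsto_eventually)
    qed
    show "AE \<omega> in M. norm \<bar>g \<omega> - gK K \<omega>\<bar> \<le> \<bar>g \<omega>\<bar>" for K
      by (rule AE_I2) (auto simp: gK_def)
  qed (use gi in auto)
  then have "eventually (\<lambda>K. (\<integral>\<omega>. \<bar>g \<omega> - gK K \<omega>\<bar> \<partial>M) < e/4) sequentially"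
    using e by (intro order_tendstoD(2)) auto
  then obtain K where K: "(\<integral>\<omega>. \<bar>g \<omega> - gK K \<omega>\<bar> \<partial>M) < e/4"
    by (auto simp: eventually_sequentially)
  have gKB: "\<forall>\<omega>\<in>space M. \<bar>gK K \<omega>\<bar> \<le> real K" by (auto simp: gK_def)
  have gKi: "integrable M (gK K)" by (rule bint[where B="real K"]) (use gKB in \<open>auto intro: AE_I2\<close>)
  define c where "c = integral\<^sup>L M (gK K)"
  have dgi: "integrable M (\<lambda>\<omega>. g \<omega> - gK K \<omega>)" using gi gKi by auto
  have cabs: "\<bar>c\<bar> < e/4"
  proof -
    have "c = - (\<integral>\<omega>. g \<omega> - gK K \<omega> \<partial>M)" using gi gKi g0 by (simp add: c_def)
    then have "\<bar>c\<bar> = \<bar>\<integral>\<omega>. g \<omega> - gK K \<omega> \<partial>M\<bar>" by simp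
    also have "\<dots> \<le> (\<integral>\<omega>. \<bar>g \<omega> - gK K \<omega>\<bar> \<partial>M)" by (rule integral_abs_bound)
    finally show ?thesis using K by linarith
  qed
  define g' where "g' \<omega> = gK K \<omega> - c" for \<omega>
  have g'm[measurable]: "g' \<in> borel_measurable M" unfolding g'_def by measurable
  have g'B: "\<forall>\<omega>\<in>space M. \<bar>g' \<omega>\<bar> \<le> real K + \<bar>c\<bar>" using gKB by (auto simp: g'_def)
  have g'i: "integrable M g'" by (rule bint[where B="real K + \<bar>c\<bar>"]) (use g'B in \<open>auto intro: AE_I2\<close>)
  have g'0: "integral\<^sup>L M g' = 0" unfolding g'_def using gKi by (simp add: c_def prob_space)
  have e2: "0 < (e/4)^2" using e by simp
  obtain ms where ms: "valid R ms" "(\<integral>\<omega>. (Av ms g' \<omega>)^2 \<partial>M) < (e/4)^2"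
    using core2[OF R g'm g'B g'0 e2] by blast
  have AvB: "AE \<omega> in M. \<bar>Av ms g' \<omega>\<bar> \<le> real K + \<bar>c\<bar>"
    using Av_bound[of ms g' "real K + \<bar>c\<bar>"] g'B ms(1) by (auto simp: valid_def intro!: AE_I2)
  have e4: "0 < e/4" using e by simp
  have a1: "(\<integral>\<omega>. \<bar>Av ms g' \<omega>\<bar> \<partial>M) \<le> (\<integral>\<omega>. (Av ms g' \<omega>)^2 \<partial>M) / (e/4) + (e/4) / 4"
    by (rule L1L2[OF Av_meas[OF g'm] AvB e4])
  have a2: "(\<integral>\<omega>. (Av ms g' \<omega>)^2 \<partial>M) / (e/4) < (e/4)^2 / (e/4)"
    using divide_strict_right_mono[OF ms(2) e4] .
  have a3: "(e/4)^2 / (e/4) = e/4" using e by (simp add: power2_eq_square)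
  have dd: "integrable M (\<lambda>\<omega>. g \<omega> - g' \<omega>)" using gi g'i by auto
  have b1: "(\<integral>\<omega>. \<bar>Av ms (\<lambda>\<omega>. g \<omega> - g' \<omega>) \<omega>\<bar> \<partial>M) \<le> 1 * (\<integral>\<omega>. \<bar>g \<omega> - g' \<omega>\<bar> \<partial>M)"
    using Av_L1[OF dd, of ms] ms(1) by (simp add: valid_def)
  have b2: "(\<integral>\<omega>. \<bar>g \<omega> - g' \<omega>\<bar> \<partial>M) \<le> (\<integral>\<omega>. \<bar>g \<omega> - gK K \<omega>\<bar> + \<bar>c\<bar> \<partial>M)"
    by (rule integral_mono_AE') (use dgi in \<open>auto simp: g'_def\<close>)
  have b3: "(\<integral>\<omega>. \<bar>g \<omega> - gK K \<omega>\<bar> + \<bar>c\<bar> \<partial>M) = (\<integral>\<omega>. \<bar>g \<omega> - gK K \<omega>\<bar> \<partial>M) + \<bar>c\<bar>"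
    using dgi by (simp add: prob_space)
  have i1: "integrable M (\<lambda>\<omega>. \<bar>Av ms g' \<omega>\<bar>)" using Av_int[OF g'i, of ms] by auto
  have i2: "integrable M (\<lambda>\<omega>. \<bar>Av ms (\<lambda>\<omega>. g \<omega> - g' \<omega>) \<omega>\<bar>)" using Av_int[OF dd, of ms] by auto
  have "(\<integral>\<omega>. \<bar>Av ms g \<omega>\<bar> \<partial>M) \<le> (\<integral>\<omega>. \<bar>Av ms g' \<omega>\<bar> + \<bar>Av ms (\<lambda>\<omega>. g \<omega> - g' \<omega>) \<omega>\<bar> \<partial>M)"
    by (rule integral_mono_AE') (use i1 i2 in \<open>auto simp: Av_diff\<close>)
  also have "\<dots> = (\<integral>\<omega>. \<bar>Av ms g' \<omega>\<bar> \<partial>M) + (\<integral>\<omega>. \<bar>Av ms (\<lambda>\<omega>. g \<omega> - g' \<omega>) \<omega>\<bar> \<partial>M)"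
    using i1 i2 by simp
  also have "\<dots> < e" using a1 a2 a3 b1 b2 b3 K cabs by linarith
  finally show ?thesis using ms(1) by blast
qed

lemma multi:
  fixes G :: "'z \<Rightarrow> 'a \<Rightarrow> real"
  assumes R: "zgen R = UNIV" and Z: "finite Z"
    and G: "\<forall>z\<in>Z. integrable M (G z) \<and> integral\<^sup>L M (G z) = 0" and e: "0 < e"
  shows "\<exists>ms. valid R ms \<and> (\<forall>z\<in>Z. (\<integral>\<omega>. \<bar>Av ms (G z) \<omega>\<bar> \<partial>M) < e)"
  using Z G
proof (induction Z rule: finite_induct)
  case empty then show ?case using valid_one by blast
next
  case (insert z0 Z)
  obtain ms1 where ms1: "valid R ms1" "\<forall>z\<in>Z. (\<integral>\<omega>. \<bar>Av ms1 (G z) \<omega>\<bar> \<partial>M) < e"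
    using insert by auto
  have G0: "integrable M (G z0)" "integral\<^sup>L M (G z0) = 0" using insert.prems by auto
  have gi: "integrable M (Av ms1 (G z0))" and g0: "integral\<^sup>L M (Av ms1 (G z0)) = 0"
    using Av_int[OF G0(1), of ms1] G0(2) ms1(1) by (auto simp: valid_def)
  obtain ms2 where ms2: "valid R ms2" "(\<integral>\<omega>. \<bar>Av ms2 (Av ms1 (G z0)) \<omega>\<bar> \<partial>M) < e"
    using coreL1[OF R gi g0 e] by blast
  have eq: "(\<integral>\<omega>. \<bar>Av (comp ms2 ms1) (G z) \<omega>\<bar> \<partial>M) = (\<integral>\<omega>. \<bar>Av ms2 (Av ms1 (G z)) \<omega>\<bar> \<partial>M)" for z
    by (rule Bochner_Integration.integral_cong) (auto simp: Av_comp)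
  have "(\<integral>\<omega>. \<bar>Av (comp ms2 ms1) (G z) \<omega>\<bar> \<partial>M) < e" if z: "z \<in> insert z0 Z" for z
  proof (cases "z = z0")
    case True then show ?thesis using eq ms2(2) by simp
  next
    case False
    then have zZ: "z \<in> Z" using z by simp
    have Gi: "integrable M (G z)" using insert.prems z by auto
    have "(\<integral>\<omega>. \<bar>Av ms2 (Av ms1 (G z)) \<omega>\<bar> \<partial>M) \<le> 1 * (\<integral>\<omega>. \<bar>Av ms1 (G z) \<omega>\<bar> \<partial>M)"
      using Av_L1[of "Av ms1 (G z)" ms2] Av_int[OF Gi, of ms1] ms2(1) by (simp add: valid_def)
    then show ?thesis using eq[of z] ms1(2) zZ by fastforce
  qed
  then show ?case using valid_comp[OF ms1(1) ms2(1)] by blast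
qed

end



lemma pathsum_Nil[simp]: "pathsum T F \<eta> [] = 0"
  by (simp add: pathsum_def)

lemma pathsum_Cons: "pathsum T F \<eta> (a # as) = F (fst \<eta>) (snd \<eta>) a + pathsum T F (Sshift T a \<eta>) as"
  unfolding pathsum_def traj_def length_Cons sum.lessThan_Suc_shift by simp

lemma pathsum_append: "pathsum T F \<eta> (as @ bs) = pathsum T F \<eta> as + pathsum T F (fold (Sshift T) as \<eta>) bs"
  by (induction as arbitrary: \<eta>) (simp_all add: pathsum_Cons)

lemma traj_end: "traj T \<eta> as (length as) = fold (Sshift T) as \<eta>"
  by (simp add: traj_def)

context erg begin

lemma fold_Sshift:
  assumes om: "\<omega> \<in> space M" and lz: "length zs = l"
  shows "fold (Sshift T) as (\<omega>, zs) = (T (sum_list (take (length as) (zs @ as))) \<omega>, drop (length as) (zs @ as))"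
proof (induction as rule: rev_induct)
  case Nil then show ?case using T0[OF om] by simp
next
  case (snoc a as)
  define n where "n = length as"
  define L where "L = zs @ as"
  have lL: "length L = l + n" using lz by (simp add: L_def n_def)
  have IH: "fold (Sshift T) as (\<omega>, zs) = (T (sum_list (take n L)) \<omega>, drop n L)"
    using snoc by (simp add: n_def L_def)
  have "fold (Sshift T) (as @ [a]) (\<omega>, zs) = Sshift T a (T (sum_list (take n L)) \<omega>, drop n L)"
    using IH by simp
  also have "\<dots> = (T (sum_list (take (Suc n) (L @ [a]))) \<omega>, drop (Suc n) (L @ [a]))"
  proof (cases "drop n L")
    case Nil
    then have "l = 0" using lL by simp
    then have "take (Suc n) (L @ [a]) = L @ [a]" "take n L = L" "drop (Suc n) (L @ [a]) = []" using lL by auto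
    moreover have "T (sum_list L + a) \<omega> = T a (T (sum_list L) \<omega>)" using Tadd[OF om, of a "sum_list L"] by (simp add: add.commute)
    ultimately show ?thesis using Nil by (simp add: Sshift_def)
  next
    case (Cons b1 bs)
    have nl: "n < length L" using Cons by (metis drop_eq_Nil not_le_imp_less list.distinct(1))
    have b1: "L ! n = b1" using Cons hd_drop_conv_nth[OF nl] by simp
    have tk: "take (Suc n) (L @ [a]) = take n L @ [b1]"
      using nl b1 by (simp add: take_Suc_conv_app_nth)
    have d1: "drop (Suc n) L = bs" using Cons by (metis drop_Suc list.sel(3) tl_drop)
    have dr: "drop (Suc n) (L @ [a]) = bs @ [a]"
      using d1 nl by (simp add: drop_append)
    have "T (sum_list (take n L) + b1) \<omega> = T b1 (T (sum_list (take n L)) \<omega>)"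
      using Tadd[OF om, of b1 "sum_list (take n L)"] by (simp add: add.commute)
    then show ?thesis using Cons tk dr by (simp add: Sshift_def)
  qed
  finally show ?case by (simp add: n_def L_def)
qed

end



locale stp = erg M T for M :: "'a measure" and T :: "int^'d \<Rightarrow> 'a \<Rightarrow> 'a" +
  fixes R :: "(int^'d) set" and l :: nat and F :: "'a \<Rightarrow> (int^'d) list \<Rightarrow> int^'d \<Rightarrow> real"
  assumes finR: "finite R" and gen: "zgen R = UNIV" and KK: "classK M T R l F"
begin

lemma Fint: "set zs \<subseteq> R \<Longrightarrow> length zs = l \<Longrightarrow> z \<in> R \<Longrightarrow> integrable M (\<lambda>\<omega>. F \<omega> zs z)"
  using KK unfolding classK_def by blast

lemma Fmean: "set as \<subseteq> R \<Longrightarrow> l \<le> length as \<Longrightarrow> (\<integral>\<omega>. pathsum T F (\<omega>, drop (length as - l) as) as \<partial>M) = 0"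
  using KK unfolding classK_def by blast

definition coc :: "'a \<Rightarrow> bool" where
  "coc \<omega> \<longleftrightarrow> (\<forall>zs as bs. set zs \<subseteq> R \<longrightarrow> length zs = l \<longrightarrow> set as \<subseteq> R \<longrightarrow> set bs \<subseteq> R \<longrightarrow>
         traj T (\<omega>, zs) as (length as) = traj T (\<omega>, zs) bs (length bs) \<longrightarrow>
         pathsum T F (\<omega>, zs) as = pathsum T F (\<omega>, zs) bs)"

lemma Fcoc: "AE \<omega> in M. coc \<omega>"
  using KK unfolding classK_def coc_def by blast

lemma Rne: "R \<noteq> {}"
proof
  assume R0: "R = {}"
  have z: "x \<in> zgen R \<Longrightarrow> x = 0" for x by (induction rule: zgen.induct) (use R0 in auto)
  have "((\<chi> i. 1) :: int^'d) = 0" using z gen by simp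
  then have "((\<chi> i. 1) :: int^'d) $ undefined = (0::int^'d) $ undefined" by simp
  then show False by simp
qed

definition c where "c = replicate l (SOME r. r \<in> R)"

lemma c_R: "set c \<subseteq> R" and c_len: "length c = l"
  using some_in_eq[of R] Rne by (auto simp: c_def)

lemma pathsum_int:
  assumes zs: "set zs \<subseteq> R" "length zs = l" and as: "set as \<subseteq> R"
  shows "integrable M (\<lambda>\<omega>. pathsum T F (\<omega>, zs) as)"
proof -
  have eq: "pathsum T F (\<omega>, zs) as = (\<Sum>i<length as. F (T (sum_list (take i (zs @ take i as))) \<omega>) (drop i (zs @ take i as)) (as ! i))"
    if om: "\<omega> \<in> space M" for \<omega>
    unfolding pathsum_def traj_def
  proof (rule sum.cong)
    fix i assume "i \<in> {..<length as}"
    then have "length (take i as) = i" by simp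
    then show "F (fst (fold (Sshift T) (take i as) (\<omega>, zs))) (snd (fold (Sshift T) (take i as) (\<omega>, zs))) (as ! i)
      = F (T (sum_list (take i (zs @ take i as))) \<omega>) (drop i (zs @ take i as)) (as ! i)"
      using fold_Sshift[OF om zs(2), of "take i as"] by simp
  qed simp
  have I: "integrable M (\<lambda>\<omega>. \<Sum>i<length as. F (T (sum_list (take i (zs @ take i as))) \<omega>) (drop i (zs @ take i as)) (as ! i))"
  proof (rule Bochner_Integration.integrable_sum)
    fix i assume i: "i \<in> {..<length as}"
    have "set (zs @ take i as) \<subseteq> R" using zs as set_take_subset[of i as] by auto
    then have b1: "set (drop i (zs @ take i as)) \<subseteq> R" using set_drop_subset by (metis order_trans)
    have b2: "length (drop i (zs @ take i as)) = l" using zs i by simp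
    have b3: "as ! i \<in> R" using as i by auto
    show "integrable M (\<lambda>\<omega>. F (T (sum_list (take i (zs @ take i as))) \<omega>) (drop i (zs @ take i as)) (as ! i))"
      by (rule integrable_T[OF Fint[OF b1 b2 b3]])
  qed
  have "integrable M (\<lambda>\<omega>. pathsum T F (\<omega>, zs) as) = integrable M (\<lambda>\<omega>. \<Sum>i<length as. F (T (sum_list (take i (zs @ take i as))) \<omega>) (drop i (zs @ take i as)) (as ! i))"
    by (rule Bochner_Integration.integrable_cong) (simp_all add: eq)
  then show ?thesis using I by simp
qed

definition G :: "int^'d \<Rightarrow> 'a \<Rightarrow> real" where
  "G z \<omega> = pathsum T F (\<omega>, c) (z # c) - pathsum T F (\<omega>, c) c"

lemma G_int: "z \<in> R \<Longrightarrow> integrable M (G z)"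
  unfolding G_def[abs_def] using pathsum_int[OF c_R c_len] c_R by auto

lemma G_mean: "z \<in> R \<Longrightarrow> integral\<^sup>L M (G z) = 0"
proof -
  assume z: "z \<in> R"
  have i1: "integrable M (\<lambda>\<omega>. pathsum T F (\<omega>, c) (z # c))" using pathsum_int[OF c_R c_len] c_R z by auto
  have i2: "integrable M (\<lambda>\<omega>. pathsum T F (\<omega>, c) c)" using pathsum_int[OF c_R c_len c_R] .
  have m1: "(\<integral>\<omega>. pathsum T F (\<omega>, c) (z # c) \<partial>M) = 0"
    using Fmean[of "z # c"] c_R z c_len by simp
  have m2: "(\<integral>\<omega>. pathsum T F (\<omega>, c) c \<partial>M) = 0"
    using Fmean[of c] c_R c_len by simp
  show ?thesis unfolding G_def[abs_def] using i1 i2 m1 m2 by simp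
qed

definition S :: "(real \<times> (int^'d) list) list \<Rightarrow> 'a \<Rightarrow> (int^'d) list \<Rightarrow> real" where
  "S ms \<omega> zs = (\<Sum>p\<leftarrow>ms. fst p * pathsum T F (\<omega>, zs) (snd p @ c @ c))"

lemma S_int: "set zs \<subseteq> R \<Longrightarrow> length zs = l \<Longrightarrow> \<forall>p\<in>set ms. set (snd p) \<subseteq> R \<Longrightarrow> integrable M (\<lambda>\<omega>. S ms \<omega> zs)"
proof (induction ms)
  case Nil then show ?case by (simp add: S_def)
next
  case (Cons p ms)
  have "integrable M (\<lambda>\<omega>. pathsum T F (\<omega>, zs) (snd p @ c @ c))"
    by (rule pathsum_int) (use Cons.prems c_R in auto)
  then show ?case using Cons by (simp add: S_def)
qed

lemma elem:
  assumes om: "\<omega> \<in> space M" and cc: "coc \<omega>" and zs: "set zs \<subseteq> R" "length zs = l" and z: "z \<in> R"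
    and w: "set w \<subseteq> R"
  shows "pathsum T F (Sshift T z (\<omega>, zs)) (w @ c @ c) - pathsum T F (\<omega>, zs) (w @ c @ c)
       = G z (T (sum_list w) (T (sum_list zs) \<omega>)) - F \<omega> zs z"
proof -
  have c1: "pathsum T F (\<omega>, zs) (z # w @ c @ c) = F \<omega> zs z + pathsum T F (Sshift T z (\<omega>, zs)) (w @ c @ c)"
    by (simp add: pathsum_Cons)
  have ends: "traj T (\<omega>, zs) (z # w @ c @ c) (length (z # w @ c @ c)) = traj T (\<omega>, zs) ((w @ c) @ z # c) (length ((w @ c) @ z # c))"
    unfolding traj_end fold_Sshift[OF om zs(2)] using zs(2) c_len by (simp add: add_ac)
  have c2: "pathsum T F (\<omega>, zs) (z # w @ c @ c) = pathsum T F (\<omega>, zs) ((w @ c) @ z # c)"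
    using cc ends zs z w c_R unfolding coc_def by (auto simp del: append_assoc)
  have fw: "fold (Sshift T) (w @ c) (\<omega>, zs) = (T (sum_list w) (T (sum_list zs) \<omega>), c)"
    unfolding fold_Sshift[OF om zs(2)] using zs(2) c_len Tadd[OF om, of "sum_list w" "sum_list zs"] by (simp add: add_ac)
  have c3: "pathsum T F (\<omega>, zs) ((w @ c) @ z # c) = pathsum T F (\<omega>, zs) (w @ c) + pathsum T F (T (sum_list w) (T (sum_list zs) \<omega>), c) (z # c)"
    by (simp only: pathsum_append fw)
  have c4: "pathsum T F (\<omega>, zs) ((w @ c) @ c) = pathsum T F (\<omega>, zs) (w @ c) + pathsum T F (T (sum_list w) (T (sum_list zs) \<omega>), c) c"
    by (simp only: pathsum_append fw)
  show ?thesis using c1 c2 c3 c4 by (simp add: G_def)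
qed

lemma Sdiff:
  assumes om: "\<omega> \<in> space M" and cc: "coc \<omega>" and zs: "set zs \<subseteq> R" "length zs = l" and z: "z \<in> R"
    and ms: "\<forall>p\<in>set ms. set (snd p) \<subseteq> R"
  shows "S ms (fst (Sshift T z (\<omega>, zs))) (snd (Sshift T z (\<omega>, zs))) - S ms \<omega> zs
       = Av ms (G z) (T (sum_list zs) \<omega>) - sum_list (map fst ms) * F \<omega> zs z"
  using ms
proof (induction ms)
  case Nil then show ?case by (simp add: S_def)
next
  case (Cons p ms)
  have e: "pathsum T F (Sshift T z (\<omega>, zs)) (snd p @ c @ c) - pathsum T F (\<omega>, zs) (snd p @ c @ c)
       = G z (T (sum_list (snd p)) (T (sum_list zs) \<omega>)) - F \<omega> zs z"
    by (rule elem[OF om cc zs z]) (use Cons.prems in auto)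
  have "S (p # ms) (fst (Sshift T z (\<omega>, zs))) (snd (Sshift T z (\<omega>, zs))) - S (p # ms) \<omega> zs
     = fst p * (pathsum T F (Sshift T z (\<omega>, zs)) (snd p @ c @ c) - pathsum T F (\<omega>, zs) (snd p @ c @ c))
       + (S ms (fst (Sshift T z (\<omega>, zs))) (snd (Sshift T z (\<omega>, zs))) - S ms \<omega> zs)"
    by (simp add: S_def algebra_simps)
  also have "\<dots> = Av (p # ms) (G z) (T (sum_list zs) \<omega>) - sum_list (map fst (p # ms)) * F \<omega> zs z"
    using Cons by (simp only: e) (simp add: algebra_simps)
  finally show ?case .
qed

end



context erg begin
lemma trunc_conv:
  fixes f :: "'a \<Rightarrow> real"
  assumes fi: "integrable M f"
  shows "(\<lambda>K::nat. \<integral>\<omega>. \<bar>max (- real K) (min (real K) (f \<omega>)) - f \<omega>\<bar> \<partial>M) \<longlonglongrightarrow> 0"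
proof -
  have fm[measurable]: "f \<in> borel_measurable M" using fi by auto
  have "(\<lambda>K::nat. \<integral>\<omega>. \<bar>max (- real K) (min (real K) (f \<omega>)) - f \<omega>\<bar> \<partial>M) \<longlonglongrightarrow> (\<integral>\<omega>. 0 \<partial>M)"
  proof (rule integral_dominated_convergence[where w="\<lambda>\<omega>. \<bar>f \<omega>\<bar>"])
    show "AE \<omega> in M. (\<lambda>K. \<bar>max (- real K) (min (real K) (f \<omega>)) - f \<omega>\<bar>) \<longlonglongrightarrow> 0"
    proof (rule AE_I2)
      fix \<omega>
      have "eventually (\<lambda>K. \<bar>max (- real K) (min (real K) (f \<omega>)) - f \<omega>\<bar> = 0) sequentially"
        unfolding eventually_sequentially
      proof (intro exI allI impI)
        fix K assume "nat \<lceil>\<bar>f \<omega>\<bar>\<rceil> \<le> K"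
        then have "\<bar>f \<omega>\<bar> \<le> real K" by linarith
        then show "\<bar>max (- real K) (min (real K) (f \<omega>)) - f \<omega>\<bar> = 0" by auto
      qed
      then show "(\<lambda>K. \<bar>max (- real K) (min (real K) (f \<omega>)) - f \<omega>\<bar>) \<longlonglongrightarrow> 0" by (rule tendsto_eventually)
    qed
    show "AE \<omega> in M. norm \<bar>max (- real K) (min (real K) (f \<omega>)) - f \<omega>\<bar> \<le> \<bar>f \<omega>\<bar>" for K
      by (rule AE_I2) auto
  qed (use fi in auto)
  then show ?thesis by simp
qed
end

context stp begin

lemma approx:
  assumes e: "0 < e"
  shows "\<exists>h. (\<forall>zs. set zs \<subseteq> R \<longrightarrow> length zs = l \<longrightarrow> (\<lambda>\<omega>. h \<omega> zs) \<in> borel_measurable M)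
        \<and> (\<exists>B. \<forall>\<omega>\<in>space M. \<forall>zs. set zs \<subseteq> R \<longrightarrow> length zs = l \<longrightarrow> \<bar>h \<omega> zs\<bar> \<le> B)
        \<and> (\<forall>zs z. set zs \<subseteq> R \<longrightarrow> length zs = l \<longrightarrow> z \<in> R \<longrightarrow>
            (\<integral>\<omega>. \<bar>h (fst (Sshift T z (\<omega>, zs))) (snd (Sshift T z (\<omega>, zs))) - h \<omega> zs - F \<omega> zs z\<bar> \<partial>M) < e)"
proof -
  have e2: "0 < e/2" using e by simp
  obtain ms where ms: "valid R ms" "\<forall>z\<in>R. (\<integral>\<omega>. \<bar>Av ms (G z) \<omega>\<bar> \<partial>M) < e/2"
    using multi[OF gen finR _ e2, of G] G_int G_mean by blast
  have msR: "\<forall>p\<in>set ms. set (snd p) \<subseteq> R" using ms(1) by (simp add: valid_def)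
  define BL where "BL = {zs. set zs \<subseteq> R \<and> length zs = l}"
  have finBL: "finite BL" unfolding BL_def by (rule finite_lists_length_eq[OF finR])
  define H where "H \<omega> zs = - S ms \<omega> zs" for \<omega> zs
  have Hi: "zs \<in> BL \<Longrightarrow> integrable M (\<lambda>\<omega>. H \<omega> zs)" for zs
    using S_int[of zs ms] msR by (auto simp: H_def BL_def)
  define tr where "tr K x = max (- real K) (min (real K) x)" for K :: nat and x :: real
  have ev: "\<forall>b\<in>BL. eventually (\<lambda>K. (\<integral>\<omega>. \<bar>tr K (H \<omega> b) - H \<omega> b\<bar> \<partial>M) < e/4) sequentially"
  proof
    fix b assume b: "b \<in> BL"
    have "(\<lambda>K. (\<integral>\<omega>. \<bar>tr K (H \<omega> b) - H \<omega> b\<bar> \<partial>M)) \<longlonglongrightarrow> 0"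
      unfolding tr_def by (rule trunc_conv[OF Hi[OF b]])
    then show "eventually (\<lambda>K. (\<integral>\<omega>. \<bar>tr K (H \<omega> b) - H \<omega> b\<bar> \<partial>M) < e/4) sequentially"
      using e by (intro order_tendstoD(2)) auto
  qed
  obtain K where K: "\<forall>b\<in>BL. (\<integral>\<omega>. \<bar>tr K (H \<omega> b) - H \<omega> b\<bar> \<partial>M) < e/4"
    using eventually_ball_finite[OF finBL ev] by (auto simp: eventually_sequentially)
  define h where "h \<omega> zs = tr K (H \<omega> zs)" for \<omega> zs
  have Hm: "zs \<in> BL \<Longrightarrow> (\<lambda>\<omega>. H \<omega> zs) \<in> borel_measurable M" for zs using Hi by auto
  have hm: "zs \<in> BL \<Longrightarrow> (\<lambda>\<omega>. h \<omega> zs) \<in> borel_measurable M" for zs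
    using Hm[of zs] unfolding h_def tr_def by measurable
  have hB: "\<forall>\<omega>\<in>space M. \<forall>zs. set zs \<subseteq> R \<longrightarrow> length zs = l \<longrightarrow> \<bar>h \<omega> zs\<bar> \<le> real K"
    by (auto simp: h_def tr_def)
  have dhi: "zs \<in> BL \<Longrightarrow> integrable M (\<lambda>\<omega>. \<bar>h \<omega> zs - H \<omega> zs\<bar>)" for zs
  proof -
    assume zs: "zs \<in> BL"
    have "integrable M (\<lambda>\<omega>. h \<omega> zs)"
      by (rule bint[where B="real K"]) (use hm[OF zs] in \<open>auto simp: h_def tr_def\<close>)
    then show ?thesis using Hi[OF zs] by auto
  qed
  have dhm: "zs \<in> BL \<Longrightarrow> (\<lambda>\<omega>. \<bar>h \<omega> zs - H \<omega> zs\<bar>) \<in> borel_measurable M" for zs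
    using dhi by auto
  have err: "(\<integral>\<omega>. \<bar>h (fst (Sshift T z (\<omega>, zs))) (snd (Sshift T z (\<omega>, zs))) - h \<omega> zs - F \<omega> zs z\<bar> \<partial>M) < e"
    if zs: "set zs \<subseteq> R" "length zs = l" and z: "z \<in> R" for zs z
  proof -
    define y where "y = (if zs = [] then z else hd zs)"
    define b where "b = (if zs = [] then [] else tl zs @ [z])"
    have Sf: "Sshift T z (\<omega>, zs) = (T y \<omega>, b)" for \<omega> by (cases zs) (simp_all add: Sshift_def y_def b_def)
    have bBL: "b \<in> BL" using zs z by (cases zs) (auto simp: b_def BL_def)
    have zsBL: "zs \<in> BL" using zs by (simp add: BL_def)
    have pw: "AE \<omega> in M. \<bar>h (T y \<omega>) b - h \<omega> zs - F \<omega> zs z\<bar> \<le>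
        \<bar>Av ms (G z) (T (sum_list zs) \<omega>)\<bar> + \<bar>h (T y \<omega>) b - H (T y \<omega>) b\<bar> + \<bar>h \<omega> zs - H \<omega> zs\<bar>"
      using Fcoc AE_space
    proof eventually_elim
      fix \<omega> assume cc: "coc \<omega>" and om: "\<omega> \<in> space M"
      have "S ms (T y \<omega>) b - S ms \<omega> zs = Av ms (G z) (T (sum_list zs) \<omega>) - 1 * F \<omega> zs z"
        using Sdiff[OF om cc zs z msR] ms(1) Sf[of \<omega>] by (simp add: valid_def)
      then have "H (T y \<omega>) b - H \<omega> zs - F \<omega> zs z = - Av ms (G z) (T (sum_list zs) \<omega>)" by (simp add: H_def)
      then show "\<bar>h (T y \<omega>) b - h \<omega> zs - F \<omega> zs z\<bar> \<le>
        \<bar>Av ms (G z) (T (sum_list zs) \<omega>)\<bar> + \<bar>h (T y \<omega>) b - H (T y \<omega>) b\<bar> + \<bar>h \<omega> zs - H \<omega> zs\<bar>"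
        by linarith
    qed
    have Gi: "integrable M (G z)" using G_int z .
    have Am: "(\<lambda>\<omega>. \<bar>Av ms (G z) \<omega>\<bar>) \<in> borel_measurable M" using Av_meas[of "G z" ms] Gi by auto
    have Ai: "integrable M (\<lambda>\<omega>. \<bar>Av ms (G z) \<omega>\<bar>)" using Av_int[OF Gi, of ms] by auto
    have i1: "integrable M (\<lambda>\<omega>. \<bar>Av ms (G z) (T (sum_list zs) \<omega>)\<bar>)"
      using integrable_T[OF Ai, of "sum_list zs"] by simp
    have i2: "integrable M (\<lambda>\<omega>. \<bar>h (T y \<omega>) b - H (T y \<omega>) b\<bar>)"
      using integrable_T[OF dhi[OF bBL], of y] by simp
    have i3: "integrable M (\<lambda>\<omega>. \<bar>h \<omega> zs - H \<omega> zs\<bar>)" using dhi[OF zsBL] .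
    have "(\<integral>\<omega>. \<bar>h (fst (Sshift T z (\<omega>, zs))) (snd (Sshift T z (\<omega>, zs))) - h \<omega> zs - F \<omega> zs z\<bar> \<partial>M)
        = (\<integral>\<omega>. \<bar>h (T y \<omega>) b - h \<omega> zs - F \<omega> zs z\<bar> \<partial>M)" by (simp add: Sf)
    also have "\<dots> \<le> (\<integral>\<omega>. \<bar>Av ms (G z) (T (sum_list zs) \<omega>)\<bar> + \<bar>h (T y \<omega>) b - H (T y \<omega>) b\<bar> + \<bar>h \<omega> zs - H \<omega> zs\<bar> \<partial>M)"
      by (rule integral_mono_AE') (use i1 i2 i3 pw in auto)
    also have "\<dots> = (\<integral>\<omega>. \<bar>Av ms (G z) (T (sum_list zs) \<omega>)\<bar> \<partial>M) + (\<integral>\<omega>. \<bar>h (T y \<omega>) b - H (T y \<omega>) b\<bar> \<partial>M) + (\<integral>\<omega>. \<bar>h \<omega> zs - H \<omega> zs\<bar> \<partial>M)"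
      using i1 i2 i3 by simp
    also have "(\<integral>\<omega>. \<bar>Av ms (G z) (T (sum_list zs) \<omega>)\<bar> \<partial>M) = (\<integral>\<omega>. \<bar>Av ms (G z) \<omega>\<bar> \<partial>M)"
      using integral_T[OF Am, of "sum_list zs"] by simp
    also have "(\<integral>\<omega>. \<bar>h (T y \<omega>) b - H (T y \<omega>) b\<bar> \<partial>M) = (\<integral>\<omega>. \<bar>h \<omega> b - H \<omega> b\<bar> \<partial>M)"
      using integral_T[OF dhm[OF bBL], of y] by simp
    finally have "(\<integral>\<omega>. \<bar>h (fst (Sshift T z (\<omega>, zs))) (snd (Sshift T z (\<omega>, zs))) - h \<omega> zs - F \<omega> zs z\<bar> \<partial>M)
      \<le> (\<integral>\<omega>. \<bar>Av ms (G z) \<omega>\<bar> \<partial>M) + (\<integral>\<omega>. \<bar>h \<omega> b - H \<omega> b\<bar> \<partial>M) + (\<integral>\<omega>. \<bar>h \<omega> zs - H \<omega> zs\<bar> \<partial>M)" .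
    moreover have "(\<integral>\<omega>. \<bar>Av ms (G z) \<omega>\<bar> \<partial>M) < e/2" using ms(2) z by blast
    moreover have "(\<integral>\<omega>. \<bar>h \<omega> b - H \<omega> b\<bar> \<partial>M) < e/4" using K bBL by (simp add: h_def)
    moreover have "(\<integral>\<omega>. \<bar>h \<omega> zs - H \<omega> zs\<bar> \<partial>M) < e/4" using K zsBL by (simp add: h_def)
    ultimately show ?thesis by linarith
  qed
  show ?thesis
    apply (rule exI[of _ h])
    using hm hB err by (auto simp: BL_def)
qed

end

theorem lemmaC3:
  fixes M :: "'a measure" and T :: "int^'d \<Rightarrow> 'a \<Rightarrow> 'a"
    and R :: "(int^'d) set" and l :: nat
    and F :: "'a \<Rightarrow> (int^'d) list \<Rightarrow> int^'d \<Rightarrow> real"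
  assumes "ergodic_action M T"
    and "finite R" and "zgen R = UNIV"
    and "classK M T R l F"
  shows "\<exists>h :: nat \<Rightarrow> 'a \<Rightarrow> (int^'d) list \<Rightarrow> real.
     (\<forall>k. (\<forall>zs. set zs \<subseteq> R \<longrightarrow> length zs = l \<longrightarrow> (\<lambda>\<omega>. h k \<omega> zs) \<in> borel_measurable M)
        \<and> (\<exists>B. \<forall>\<omega>\<in>space M. \<forall>zs. set zs \<subseteq> R \<longrightarrow> length zs = l \<longrightarrow> \<bar>h k \<omega> zs\<bar> \<le> B))
   \<and> (\<forall>zs z. set zs \<subseteq> R \<longrightarrow> length zs = l \<longrightarrow> z \<in> R \<longrightarrow>
        (\<lambda>k. \<integral>\<omega>. \<bar>h k (fst (Sshift T z (\<omega>, zs))) (snd (Sshift T z (\<omega>, zs)))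
                    - h k \<omega> zs - F \<omega> zs z\<bar> \<partial>M) \<longlonglongrightarrow> 0)"
proof -
  interpret stp M T R l F
    unfolding stp_def stp_axioms_def erg_def using assms by auto
  have "\<forall>k. \<exists>h. (\<forall>zs. set zs \<subseteq> R \<longrightarrow> length zs = l \<longrightarrow> (\<lambda>\<omega>. h \<omega> zs) \<in> borel_measurable M)
        \<and> (\<exists>B. \<forall>\<omega>\<in>space M. \<forall>zs. set zs \<subseteq> R \<longrightarrow> length zs = l \<longrightarrow> \<bar>h \<omega> zs\<bar> \<le> B)
        \<and> (\<forall>zs z. set zs \<subseteq> R \<longrightarrow> length zs = l \<longrightarrow> z \<in> R \<longrightarrow>
            (\<integral>\<omega>. \<bar>h (fst (Sshift T z (\<omega>, zs))) (snd (Sshift T z (\<omega>, zs))) - h \<omega> zs - F \<omega> zs z\<bar> \<partial>M) < inverse (real (Suc k)))"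
    by (intro allI approx) simp
  from choice[OF this] obtain hs where hs: "\<forall>k. (\<forall>zs. set zs \<subseteq> R \<longrightarrow> length zs = l \<longrightarrow> (\<lambda>\<omega>. hs k \<omega> zs) \<in> borel_measurable M)
        \<and> (\<exists>B. \<forall>\<omega>\<in>space M. \<forall>zs. set zs \<subseteq> R \<longrightarrow> length zs = l \<longrightarrow> \<bar>hs k \<omega> zs\<bar> \<le> B)
        \<and> (\<forall>zs z. set zs \<subseteq> R \<longrightarrow> length zs = l \<longrightarrow> z \<in> R \<longrightarrow>
            (\<integral>\<omega>. \<bar>hs k (fst (Sshift T z (\<omega>, zs))) (snd (Sshift T z (\<omega>, zs))) - hs k \<omega> zs - F \<omega> zs z\<bar> \<partial>M) < inverse (real (Suc k)))"
    by blast
  have lim: "(\<lambda>k. \<integral>\<omega>. \<bar>hs k (fst (Sshift T z (\<omega>, zs))) (snd (Sshift T z (\<omega>, zs))) - hs k \<omega> zs - F \<omega> zs z\<bar> \<partial>M) \<longlonglongrightarrow> 0"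
    if "set zs \<subseteq> R" "length zs = l" "z \<in> R" for zs z
  proof (rule tendsto_sandwich[of "\<lambda>k. 0" _ sequentially "\<lambda>k. inverse (real (Suc k))"])
    show "eventually (\<lambda>k. 0 \<le> (\<integral>\<omega>. \<bar>hs k (fst (Sshift T z (\<omega>, zs))) (snd (Sshift T z (\<omega>, zs))) - hs k \<omega> zs - F \<omega> zs z\<bar> \<partial>M)) sequentially"
      by (simp add: integral_nonneg_AE)
    show "eventually (\<lambda>k. (\<integral>\<omega>. \<bar>hs k (fst (Sshift T z (\<omega>, zs))) (snd (Sshift T z (\<omega>, zs))) - hs k \<omega> zs - F \<omega> zs z\<bar> \<partial>M) \<le> inverse (real (Suc k))) sequentially"
    proof (rule always_eventually, rule allI)
      fix k
      have "(\<integral>\<omega>. \<bar>hs k (fst (Sshift T z (\<omega>, zs))) (snd (Sshift T z (\<omega>, zs))) - hs k \<omega> zs - F \<omega> zs z\<bar> \<partial>M) < inverse (real (Suc k))"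
        using hs that by blast
      then show "(\<integral>\<omega>. \<bar>hs k (fst (Sshift T z (\<omega>, zs))) (snd (Sshift T z (\<omega>, zs))) - hs k \<omega> zs - F \<omega> zs z\<bar> \<partial>M) \<le> inverse (real (Suc k))"
        by (rule less_imp_le)
    qed
  qed (simp_all only: LIMSEQ_inverse_real_of_nat tendsto_const)
  show ?thesis using hs lim by blast
qed


end
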